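(* With the notation of the context, let $\hat u=\frac{\ell}{\ell-1}u$, and let $(\bar x,\bar y)$ be an integral solution of the capacitated facility location instance with client set $C_r$ and capacity $\hat u$ that serves every client of $C_r$, violates capacities by a factor at most $\beta$ (each open facility $i$ has $\sum_{j\in C_r}\bar x_{ij}\le\beta\hat u$), and has cost $\sum_{j\in C_r}\sum_i c(i,j)\bar x_{ij}+\sum_i f_i\bar y_i\le \alpha\big(\sum_{j\in C_r}\sum_i c(i,j)\hat x_{ij}+\sum_i f_i\hat y_i\big)$. Then $(\bar x,\bar y,\hat z)$ is an integral solution of the CFLPP instance (clients in $C_p$ pay penalty, clients in $C_r$ are served) whose cost is at most $\max\{\alpha(1+\frac{1}{\ell-1}),\ \ell\}\cdot\mathrm{OPT}_{LP}$ and in which each open facility serves at most $\beta(1+\frac{1}{\ell-1})u$ clients, for every $\ell\ge 2$.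
   Context: Instance of CFLPP: clients $C$, facilities $F$, opening costs $f_i\ge0$, metric service costs $c(i,j)\ge0$, penalties $p_j\ge0$, uniform capacity $u$. $\mathrm{LP}_{CFLPP}$: minimize $\sum_{j}\sum_{i}c(i,j)x_{ij}+\sum_if_iy_i+\sum_jp_jz_j$ subject to $\sum_ix_{ij}+z_j\ge1$ ($j\in C$), $\sum_jx_{ij}\le u y_i$ ($i\in F$), $x_{ij}\le y_i$, and $x,y,z\in[0,1]$. Let $\rho^*=(x^*,y^*,z^* )$ be an optimal solution with value $\mathrm{OPT}_{LP}$ and $\sum_ix^*_{ij}\le1$ for all $j$. Fix $\ell\ge2$, $C_p=\{j: z^*_j\ge1/\ell\}$, $C_r=C\setminus C_p$. Define $\hat z_j=1$, $\hat x_{ij}=0$ for $j\in C_p$; $\hat z_j=0$, $\hat x_{ij}=x^*_{ij}/\sum_{i'}x^*_{i'j}$ for $j\in C_r$; and $\hat y_i=\min\{1, y^*_i\max_{j\in C_r:x^*_{ij}>0}\hat x_{ij}/x^*_{ij}\}$ (or $y^*_i$ if the max is over an empty set). Then $(\hat x|_{C_r},\hat y)$ is feasible for the natural LP of capacitated facility location on clients $C_r$ with capacity $\frac{\ell}{\ell-1}u$. *)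

theory Defs
  imports Main "HOL.Real"
begin

definition lp_feasible ::
  "'c set \<Rightarrow> 'f set \<Rightarrow> real \<Rightarrow> ('f \<Rightarrow> 'c \<Rightarrow> real) \<Rightarrow> ('f \<Rightarrow> real) \<Rightarrow> ('c \<Rightarrow> real) \<Rightarrow> bool" where
  "lp_feasible C F u x y z \<longleftrightarrow>
     (\<forall>j\<in>C. (\<Sum>i\<in>F. x i j) + z j \<ge> 1) \<and>
     (\<forall>i\<in>F. (\<Sum>j\<in>C. x i j) \<le> u * y i) \<and>
     (\<forall>i\<in>F. \<forall>j\<in>C. x i j \<le> y i) \<and>
     (\<forall>i\<in>F. \<forall>j\<in>C. 0 \<le> x i j \<and> x i j \<le> 1) \<and>
     (\<forall>i\<in>F. 0 \<le> y i \<and> y i \<le> 1) \<and>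
     (\<forall>j\<in>C. 0 \<le> z j \<and> z j \<le> 1)"

definition cflpp_cost ::
  "'c set \<Rightarrow> 'f set \<Rightarrow> ('f \<Rightarrow> 'c \<Rightarrow> real) \<Rightarrow> ('f \<Rightarrow> real) \<Rightarrow> ('c \<Rightarrow> real)
   \<Rightarrow> ('f \<Rightarrow> 'c \<Rightarrow> real) \<Rightarrow> ('f \<Rightarrow> real) \<Rightarrow> ('c \<Rightarrow> real) \<Rightarrow> real" where
  "cflpp_cost C F c f p x y z =
     (\<Sum>j\<in>C. \<Sum>i\<in>F. c i j * x i j) + (\<Sum>i\<in>F. f i * y i) + (\<Sum>j\<in>C. p j * z j)"

definition cfl_cost ::
  "'c set \<Rightarrow> 'f set \<Rightarrow> ('f \<Rightarrow> 'c \<Rightarrow> real) \<Rightarrow> ('f \<Rightarrow> real)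
   \<Rightarrow> ('f \<Rightarrow> 'c \<Rightarrow> real) \<Rightarrow> ('f \<Rightarrow> real) \<Rightarrow> real" where
  "cfl_cost C F c f x y = (\<Sum>j\<in>C. \<Sum>i\<in>F. c i j * x i j) + (\<Sum>i\<in>F. f i * y i)"

definition Cp :: "'c set \<Rightarrow> ('c \<Rightarrow> real) \<Rightarrow> real \<Rightarrow> 'c set" where
  "Cp C zs l = {j\<in>C. zs j \<ge> 1 / l}"

definition Cr :: "'c set \<Rightarrow> ('c \<Rightarrow> real) \<Rightarrow> real \<Rightarrow> 'c set" where
  "Cr C zs l = C - Cp C zs l"

definition z_hat :: "'c set \<Rightarrow> ('c \<Rightarrow> real) \<Rightarrow> real \<Rightarrow> 'c \<Rightarrow> real" where
  "z_hat C zs l j = (if j \<in> Cp C zs l then 1 else 0)"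

definition x_hat :: "'c set \<Rightarrow> 'f set \<Rightarrow> ('f \<Rightarrow> 'c \<Rightarrow> real) \<Rightarrow> ('c \<Rightarrow> real) \<Rightarrow> real
                     \<Rightarrow> 'f \<Rightarrow> 'c \<Rightarrow> real" where
  "x_hat C F xs zs l i j =
     (if j \<in> Cr C zs l then xs i j / (\<Sum>i'\<in>F. xs i' j) else 0)"

definition y_hat :: "'c set \<Rightarrow> 'f set \<Rightarrow> ('f \<Rightarrow> 'c \<Rightarrow> real) \<Rightarrow> ('f \<Rightarrow> real) \<Rightarrow> ('c \<Rightarrow> real)
                     \<Rightarrow> real \<Rightarrow> 'f \<Rightarrow> real" where
  "y_hat C F xs ys zs l i =
     (let S = {j\<in>Cr C zs l. xs i j > 0} in
      if S = {} then ys i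
      else min 1 (ys i * Max ((\<lambda>j. x_hat C F xs zs l i j / xs i j) ` S)))"

end

theory Submission
  imports Defs
begin

theorem lemma1:
  fixes C :: "'c set" and F :: "'f set"
    and c :: "'f \<Rightarrow> 'c \<Rightarrow> real" and f :: "'f \<Rightarrow> real" and p :: "'c \<Rightarrow> real"
    and u l \<alpha> \<beta> :: real
    and xs :: "'f \<Rightarrow> 'c \<Rightarrow> real" and ys :: "'f \<Rightarrow> real" and zs :: "'c \<Rightarrow> real"
    and xb :: "'f \<Rightarrow> 'c \<Rightarrow> real" and yb :: "'f \<Rightarrow> real"
  assumes finC: "finite C" and finF: "finite F"
    and f_nonneg: "\<forall>i\<in>F. 0 \<le> f i"
    and c_nonneg: "\<forall>i\<in>F. \<forall>j\<in>C. 0 \<le> c i j"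
    and c_metric: "\<forall>i\<in>F. \<forall>i'\<in>F. \<forall>j\<in>C. \<forall>j'\<in>C. c i j \<le> c i j' + c i' j' + c i' j"
    and p_nonneg: "\<forall>j\<in>C. 0 \<le> p j"
    and u_nonneg: "0 \<le> u"
    and opt_feas: "lp_feasible C F u xs ys zs"
    and opt_min: "\<forall>x y z. lp_feasible C F u x y z \<longrightarrow>
                    cflpp_cost C F c f p xs ys zs \<le> cflpp_cost C F c f p x y z"
    and opt_sum: "\<forall>j\<in>C. (\<Sum>i\<in>F. xs i j) \<le> 1"
    and l_ge: "l \<ge> 2"
    and xb_int: "\<forall>i\<in>F. \<forall>j\<in>Cr C zs l. xb i j \<in> {0, 1}"
    and yb_int: "\<forall>i\<in>F. yb i \<in> {0, 1}"
    and xb_le_yb: "\<forall>i\<in>F. \<forall>j\<in>Cr C zs l. xb i j \<le> yb i"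
    and xb_serves: "\<forall>j\<in>Cr C zs l. (\<Sum>i\<in>F. xb i j) \<ge> 1"
    and xb_cap: "\<forall>i\<in>F. yb i = 1 \<longrightarrow> (\<Sum>j\<in>Cr C zs l. xb i j) \<le> \<beta> * (l / (l - 1) * u)"
    and xb_cost: "cfl_cost (Cr C zs l) F c f xb yb
                    \<le> \<alpha> * cfl_cost (Cr C zs l) F c f (x_hat C F xs zs l) (y_hat C F xs ys zs l)"
  shows "(let x = (\<lambda>i j. if j \<in> Cr C zs l then xb i j else 0); z = z_hat C zs l in
          (\<forall>i\<in>F. \<forall>j\<in>C. x i j \<in> {0, 1}) \<and>
          (\<forall>i\<in>F. yb i \<in> {0, 1}) \<and>
          (\<forall>j\<in>C. z j \<in> {0, 1}) \<and>
          (\<forall>j\<in>Cp C zs l. z j = 1 \<and> (\<forall>i\<in>F. x i j = 0)) \<and>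
          (\<forall>j\<in>Cr C zs l. z j = 0 \<and> (\<Sum>i\<in>F. x i j) \<ge> 1) \<and>
          (\<forall>j\<in>C. (\<Sum>i\<in>F. x i j) + z j \<ge> 1) \<and>
          (\<forall>i\<in>F. \<forall>j\<in>C. x i j \<le> yb i) \<and>
          cflpp_cost C F c f p x yb z
            \<le> max (\<alpha> * (1 + 1 / (l - 1))) l * cflpp_cost C F c f p xs ys zs \<and>
          (\<forall>i\<in>F. yb i = 1 \<longrightarrow> (\<Sum>j\<in>C. x i j) \<le> \<beta> * (1 + 1 / (l - 1)) * u))"
proof -
  define Crs where "Crs = Cr C zs l"
  define Cps where "Cps = Cp C zs l"
  define L where "L = l / (l - 1)"
  have l1: "l - 1 > 0" using l_ge by simp
  have Lp: "L > 0" unfolding L_def using l1 l_ge by simp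
  have L1: "1 \<le> L" unfolding L_def using l1 by simp
  have LL: "1 + 1 / (l - 1) = L" unfolding L_def using l1 by (simp add: field_simps)
  have CpC: "Cps \<subseteq> C" unfolding Cps_def Cp_def by auto
  have CrC: "Crs = C - Cps" unfolding Crs_def Cps_def Cr_def by simp
  have finCr: "finite Crs" using finC CrC by simp
  have finCp: "finite Cps" using finC CpC finite_subset by blast
  have disj: "Crs \<inter> Cps = {}" and un: "C = Crs \<union> Cps" using CrC CpC by auto
  note feas = opt_feas[unfolded lp_feasible_def]
  have xs0: "\<forall>i\<in>F. \<forall>j\<in>C. 0 \<le> xs i j" using feas by blast
  have ys0: "\<forall>i\<in>F. 0 \<le> ys i" using feas by blast
  have zs0: "\<forall>j\<in>C. 0 \<le> zs j \<and> zs j \<le> 1" using feas by blast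
  have cov: "\<forall>j\<in>C. (\<Sum>i\<in>F. xs i j) + zs j \<ge> 1" using feas by blast
  have sinv: "0 < (\<Sum>i\<in>F. xs i j) \<and> 1 / (\<Sum>i\<in>F. xs i j) \<le> L" if j: "j \<in> Crs" for j
  proof -
    have jC: "j \<in> C" and zj: "zs j < 1 / l" using j unfolding Crs_def Cr_def Cp_def by auto
    have s1: "(\<Sum>i\<in>F. xs i j) \<ge> 1 - zs j" using cov jC by force
    have "1 - zs j > (l - 1) / l" using zj l_ge by (simp add: field_simps)
    hence sg: "(\<Sum>i\<in>F. xs i j) > (l - 1) / l" using s1 by linarith
    have pos: "(l - 1) / l > 0" using l1 l_ge by simp
    have sp: "(\<Sum>i\<in>F. xs i j) > 0" using sg pos by linarith
    have "1 / (\<Sum>i\<in>F. xs i j) \<le> 1 / ((l - 1) / l)"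
      by (rule divide_left_mono[OF less_imp_le[OF sg] _ mult_pos_pos[OF sp pos]]) simp
    also have "\<dots> = L" unfolding L_def by simp
    finally show ?thesis using sg pos by linarith
  qed
  have xh: "x_hat C F xs zs l i j \<le> L * xs i j" "0 \<le> x_hat C F xs zs l i j"
    if "i \<in> F" "j \<in> Crs" for i j
  proof -
    have s: "0 < (\<Sum>i\<in>F. xs i j)" "1 / (\<Sum>i\<in>F. xs i j) \<le> L" using sinv that(2) by auto
    have x0: "0 \<le> xs i j" using xs0 that unfolding Crs_def Cr_def by auto
    have "x_hat C F xs zs l i j = xs i j * (1 / (\<Sum>i\<in>F. xs i j))"
      using that(2) unfolding x_hat_def Crs_def by simp
    moreover have "xs i j * (1 / (\<Sum>i\<in>F. xs i j)) \<le> xs i j * L"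
      using s x0 by (intro mult_left_mono) auto
    moreover have "0 \<le> xs i j * (1 / (\<Sum>i\<in>F. xs i j))" using s x0 by simp
    ultimately show "x_hat C F xs zs l i j \<le> L * xs i j" "0 \<le> x_hat C F xs zs l i j"
      by (auto simp: mult.commute)
  qed
  have yh: "y_hat C F xs ys zs l i \<le> L * ys i \<and> 0 \<le> y_hat C F xs ys zs l i" if i: "i \<in> F" for i
  proof -
    define S where "S = {j\<in>Cr C zs l. xs i j > 0}"
    have SC: "S \<subseteq> Crs" unfolding S_def Crs_def by auto
    have finS: "finite S" using SC finCr finite_subset by blast
    have yi: "0 \<le> ys i" using ys0 i by auto
    show ?thesis
    proof (cases "S = {}")
      case True
      hence "y_hat C F xs ys zs l i = ys i" unfolding y_hat_def Let_def S_def by simp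
      moreover have "ys i \<le> L * ys i" using yi L1 mult_right_mono[OF L1 yi] by simp
      ultimately show ?thesis using yi by simp
    next
      case False
      let ?g = "\<lambda>j. x_hat C F xs zs l i j / xs i j"
      have eq: "y_hat C F xs ys zs l i = min 1 (ys i * Max (?g ` S))"
        using False unfolding y_hat_def Let_def S_def by (simp only: if_False)
      have gb: "?g j \<le> L \<and> 0 \<le> ?g j" if "j \<in> S" for j
      proof -
        have jr: "j \<in> Crs" and xp: "xs i j > 0" using that SC unfolding S_def by auto
        have "?g j \<le> L" using xh(1)[OF i jr] xp by (simp add: pos_divide_le_eq)
        thus ?thesis using xp xh(2)[OF i jr] by simp
      qed
      have "Max (?g ` S) \<in> ?g ` S" using finS False by simp
      then obtain j where "j \<in> S" "Max (?g ` S) = ?g j" by auto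
      hence M: "Max (?g ` S) \<le> L" "0 \<le> Max (?g ` S)" using gb by auto
      have "ys i * Max (?g ` S) \<le> ys i * L" using M yi by (intro mult_left_mono) auto
      moreover have "0 \<le> ys i * Max (?g ` S)" using M yi by simp
      ultimately show ?thesis unfolding eq by (auto simp: mult.commute)
    qed
  qed
  define Ar where "Ar = (\<Sum>j\<in>Crs. \<Sum>i\<in>F. c i j * xs i j)"
  define A where "A = (\<Sum>j\<in>C. \<Sum>i\<in>F. c i j * xs i j)"
  define B where "B = (\<Sum>i\<in>F. f i * ys i)"
  define P where "P = (\<Sum>j\<in>C. p j * zs j)"
  define Pp where "Pp = (\<Sum>j\<in>Cps. p j)"
  define H where "H = cfl_cost Crs F c f (x_hat C F xs zs l) (y_hat C F xs ys zs l)"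
  define X where "X = cfl_cost Crs F c f xb yb"
  have A0: "\<forall>j\<in>C. 0 \<le> (\<Sum>i\<in>F. c i j * xs i j)" using c_nonneg xs0 by (auto intro: sum_nonneg)
  have ArA: "Ar \<le> A" unfolding Ar_def A_def using A0 finC CrC
    by (intro sum_mono2) auto
  have Ar0: "0 \<le> Ar" unfolding Ar_def
  proof (rule sum_nonneg)
    fix j assume "j \<in> Crs" hence "j \<in> C" using CrC by simp
    thus "0 \<le> (\<Sum>i\<in>F. c i j * xs i j)" using A0 by blast
  qed
  have B0: "0 \<le> B" unfolding B_def using f_nonneg ys0 by (auto intro: sum_nonneg)
  have P0: "0 \<le> P" unfolding P_def using p_nonneg zs0 by (auto intro: sum_nonneg)
  have H1: "(\<Sum>j\<in>Crs. \<Sum>i\<in>F. c i j * x_hat C F xs zs l i j) \<le> L * Ar"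
    unfolding Ar_def sum_distrib_left
  proof (intro sum_mono)
    fix j i assume ji: "j \<in> Crs" "i \<in> F"
    hence c0: "0 \<le> c i j" using c_nonneg CrC by auto
    have "c i j * x_hat C F xs zs l i j \<le> c i j * (L * xs i j)"
      by (rule mult_left_mono[OF xh(1)[OF ji(2) ji(1)] c0])
    thus "c i j * x_hat C F xs zs l i j \<le> L * (c i j * xs i j)" by (simp add: algebra_simps)
  qed
  have H1': "0 \<le> (\<Sum>j\<in>Crs. \<Sum>i\<in>F. c i j * x_hat C F xs zs l i j)"
  proof (intro sum_nonneg)
    fix j i assume ji: "j \<in> Crs" "i \<in> F"
    hence c0: "0 \<le> c i j" using c_nonneg CrC by auto
    thus "0 \<le> c i j * x_hat C F xs zs l i j" using xh(2)[OF ji(2) ji(1)] by simp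
  qed
  have H2: "(\<Sum>i\<in>F. f i * y_hat C F xs ys zs l i) \<le> L * B"
    unfolding B_def sum_distrib_left
  proof (intro sum_mono)
    fix i assume i: "i \<in> F"
    show "f i * y_hat C F xs ys zs l i \<le> L * (f i * ys i)"
      using yh[OF i] f_nonneg i mult_left_mono[of "y_hat C F xs ys zs l i" "L * ys i" "f i"] by (auto simp: algebra_simps)
  qed
  have H2': "0 \<le> (\<Sum>i\<in>F. f i * y_hat C F xs ys zs l i)"
    by (rule sum_nonneg) (use f_nonneg yh in simp)
  have HL: "H \<le> L * (Ar + B)" "0 \<le> H" unfolding H_def cfl_cost_def using H1 H2 H1' H2'
    by (auto simp: distrib_left)
  have XH: "X \<le> \<alpha> * H" using xb_cost unfolding X_def H_def Crs_def .
  have PpP: "Pp \<le> l * P"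
  proof -
    have "Pp \<le> (\<Sum>j\<in>Cps. l * (p j * zs j))" unfolding Pp_def
    proof (intro sum_mono)
      fix j assume j: "j \<in> Cps"
      hence "zs j \<ge> 1 / l" "0 \<le> p j" using p_nonneg CpC unfolding Cps_def Cp_def by auto
      hence "l * zs j \<ge> 1" using l_ge by (simp add: field_simps)
      hence "p j * (l * zs j) \<ge> p j * 1" using \<open>0 \<le> p j\<close> by (intro mult_left_mono) auto
      thus "p j \<le> l * (p j * zs j)" by (simp add: algebra_simps)
    qed
    also have "\<dots> = l * (\<Sum>j\<in>Cps. p j * zs j)" by (simp add: sum_distrib_left)
    also have "\<dots> \<le> l * P" unfolding P_def using l_ge p_nonneg zs0 finC CpC
      by (intro mult_left_mono sum_mono2) auto
    finally show ?thesis .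
  qed
  define x where "x = (\<lambda>i j. if j \<in> Cr C zs l then xb i j else 0)"
  define z where "z = z_hat C zs l"
  have newc: "cflpp_cost C F c f p x yb z = X + Pp"
  proof -
    have a: "(\<Sum>j\<in>C. \<Sum>i\<in>F. c i j * x i j) = (\<Sum>j\<in>Crs. \<Sum>i\<in>F. c i j * xb i j)"
    proof -
      have "(\<Sum>j\<in>C. \<Sum>i\<in>F. c i j * x i j) = (\<Sum>j\<in>Crs. \<Sum>i\<in>F. c i j * x i j) + (\<Sum>j\<in>Cps. \<Sum>i\<in>F. c i j * x i j)"
        by (subst un) (rule sum.union_disjoint[OF finCr finCp disj])
      moreover have "(\<Sum>j\<in>Cps. \<Sum>i\<in>F. c i j * x i j) = 0"
      proof (rule sum.neutral, rule ballI)
        fix j assume "j \<in> Cps" hence "j \<notin> Cr C zs l" using disj Crs_def by blast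
        thus "(\<Sum>i\<in>F. c i j * x i j) = 0" unfolding x_def by simp
      qed
      moreover have "(\<Sum>j\<in>Crs. \<Sum>i\<in>F. c i j * x i j) = (\<Sum>j\<in>Crs. \<Sum>i\<in>F. c i j * xb i j)"
        unfolding x_def Crs_def by simp
      ultimately show ?thesis by simp
    qed
    have b: "(\<Sum>j\<in>C. p j * z j) = Pp"
    proof -
      have "(\<Sum>j\<in>C. p j * z j) = (\<Sum>j\<in>Crs. p j * z j) + (\<Sum>j\<in>Cps. p j * z j)"
        by (subst un) (rule sum.union_disjoint[OF finCr finCp disj])
      moreover have "(\<Sum>j\<in>Crs. p j * z j) = 0"
      proof (rule sum.neutral, rule ballI)
        fix j assume "j \<in> Crs" hence "j \<notin> Cp C zs l" using disj Cps_def by blast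
        thus "p j * z j = 0" unfolding z_def z_hat_def by simp
      qed
      moreover have "(\<Sum>j\<in>Cps. p j * z j) = Pp"
        unfolding z_def z_hat_def Cps_def Pp_def by simp
      ultimately show ?thesis by simp
    qed
    show ?thesis unfolding cflpp_cost_def X_def cfl_cost_def a b by simp
  qed
  define M where "M = max (\<alpha> * (1 + 1 / (l - 1))) l"
  have OPT: "cflpp_cost C F c f p xs ys zs = A + B + P" unfolding cflpp_cost_def A_def B_def P_def ..
  have cost: "X + Pp \<le> M * (A + B + P)"
  proof -
    have Ml: "l \<le> M" unfolding M_def by simp
    have XM: "X \<le> M * (A + B)"
    proof (cases "\<alpha> \<ge> 0")
      case True
      have "X \<le> \<alpha> * (L * (Ar + B))" using XH mult_left_mono[OF HL(1) True] by linarith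
      also have "\<dots> = (\<alpha> * L) * (Ar + B)" by simp
      also have "\<dots> \<le> M * (Ar + B)" unfolding M_def LL[symmetric]
        using Ar0 B0 by (intro mult_right_mono) auto
      also have "\<dots> \<le> M * (A + B)" using ArA Ml l_ge by (intro mult_left_mono) auto
      finally show ?thesis .
    next
      case False
      hence "\<alpha> * H \<le> 0" using HL(2) by (simp add: mult_nonpos_nonneg)
      moreover have "0 \<le> M * (A + B)" using Ml l_ge ArA Ar0 B0 by simp
      ultimately show ?thesis using XH by linarith
    qed
    have "Pp \<le> M * P" using PpP mult_right_mono[OF Ml P0] by linarith
    with XM show ?thesis by (simp add: distrib_left)
  qed
  show ?thesis
    unfolding Let_def x_def[symmetric] z_def[symmetric]
  proof (intro conjI)
    show "\<forall>i\<in>F. \<forall>j\<in>C. x i j \<in> {0, 1}" using xb_int unfolding x_def by auto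
    show "\<forall>i\<in>F. yb i \<in> {0, 1}" by (rule yb_int)
    show "\<forall>j\<in>C. z j \<in> {0, 1}" unfolding z_def z_hat_def by auto
    show "\<forall>j\<in>Cp C zs l. z j = 1 \<and> (\<forall>i\<in>F. x i j = 0)"
      unfolding z_def z_hat_def x_def Cr_def by auto
    show "\<forall>j\<in>Cr C zs l. z j = 0 \<and> 1 \<le> (\<Sum>i\<in>F. x i j)"
      using xb_serves unfolding z_def z_hat_def x_def Cr_def by auto
    show "\<forall>j\<in>C. 1 \<le> (\<Sum>i\<in>F. x i j) + z j"
    proof
      fix j assume j: "j \<in> C"
      show "1 \<le> (\<Sum>i\<in>F. x i j) + z j"
      proof (cases "j \<in> Cr C zs l")
        case True
        thus ?thesis using xb_serves unfolding z_def z_hat_def x_def Cr_def by auto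
      next
        case False
        hence "j \<in> Cp C zs l" using j unfolding Cr_def by auto
        thus ?thesis using False unfolding z_def z_hat_def x_def by auto
      qed
    qed
    show "\<forall>i\<in>F. \<forall>j\<in>C. x i j \<le> yb i"
      using xb_le_yb yb_int unfolding x_def by force
    show "cflpp_cost C F c f p x yb z \<le> max (\<alpha> * (1 + 1 / (l - 1))) l * cflpp_cost C F c f p xs ys zs"
      using newc cost OPT unfolding M_def by simp
    show "\<forall>i\<in>F. yb i = 1 \<longrightarrow> (\<Sum>j\<in>C. x i j) \<le> \<beta> * (1 + 1 / (l - 1)) * u"
    proof (intro ballI impI)
      fix i assume i: "i \<in> F" "yb i = 1"
      have "(\<Sum>j\<in>C. x i j) = (\<Sum>j\<in>Crs. xb i j)"
      proof -
        have "(\<Sum>j\<in>C. x i j) = (\<Sum>j\<in>Crs. x i j) + (\<Sum>j\<in>Cps. x i j)"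
          by (subst un) (rule sum.union_disjoint[OF finCr finCp disj])
        moreover have "(\<Sum>j\<in>Cps. x i j) = 0"
        proof (rule sum.neutral, rule ballI)
          fix j assume "j \<in> Cps" hence "j \<notin> Cr C zs l" using disj Crs_def by blast
          thus "x i j = 0" unfolding x_def by simp
        qed
        ultimately show ?thesis unfolding x_def Crs_def by simp
      qed
      also have "\<dots> \<le> \<beta> * (l / (l - 1) * u)" using xb_cap i unfolding Crs_def by auto
      also have "\<dots> = \<beta> * (1 + 1 / (l - 1)) * u" using LL unfolding L_def by simp
      finally show "(\<Sum>j\<in>C. x i j) \<le> \<beta> * (1 + 1 / (l - 1)) * u" .
    qed
  qed
qed

end
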